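(* Let $n\ge 1$, let $w \in S_n$ be a permutation of $\{1,\dots,n\}$, and let $\phi(w) = p_1 \cdots p_n$ be the associated Motzkin path. Then \[\operatorname{dep}(w) = \sum_{k:\, p_k = D} k \;-\; \sum_{i:\, p_i = U} i.\]
   Context: For $w\in S_n$, the depth is $\operatorname{dep}(w)=\sum_{i:\,w(i)>i}(w(i)-i)$, i.e. half the total displacement $\sum_{i=1}^n |w(i)-i|$. (This equals the minimum of $\sum_{s=1}^k (j_s-i_s)$ over all factorizations $w=(i_1\,j_1)\cdots(i_k\,j_k)$ into transpositions with $i_s<j_s$.) A Motzkin path of length $n$ is a word $p_1\cdots p_n$ in the letters $U,D,H$ such that the subword formed by the letters $U$ and $D$ is a balanced parenthesization ($U$ opening, $D$ closing). The map $\phi\colon S_n\to\{\text{Motzkin paths of length } n\}$ is defined by $\phi(w)=p_1\cdots p_n$ where $p_i=U$ if $w^{-1}(i)>i<w(i)$, $p_i=D$ if $w^{-1}(i)<i>w(i)$, and $p_i=H$ otherwise. *)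

theory Defs
  imports "HOL-Combinatorics.Permutations"
begin

text \<open>Permutations of {1..n} are functions w :: nat => nat with w permutes {1..n}.\<close>

definition dep :: "nat \<Rightarrow> (nat \<Rightarrow> nat) \<Rightarrow> nat" where
  "dep n w = (\<Sum>i\<in>{i\<in>{1..n}. w i > i}. w i - i)"

datatype step = U | D | H

definition motzkin_step :: "(nat \<Rightarrow> nat) \<Rightarrow> nat \<Rightarrow> step" where
  "motzkin_step w i =
     (if inv w i > i \<and> i < w i then U
      else if inv w i < i \<and> i > w i then D
      else H)"

text \<open>phi w = p_1 ... p_n; list index k-1 holds p_k.\<close>
definition phi :: "nat \<Rightarrow> (nat \<Rightarrow> nat) \<Rightarrow> step list" where
  "phi n w = map (motzkin_step w) [1..<n+1]"

end

theory Submission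
  imports Defs
begin

theorem proposition3p1:
  fixes n :: nat and w :: "nat \<Rightarrow> nat"
  assumes "n \<ge> 1" and "w permutes {1..n}"
  shows "int (dep n w) =
           int (\<Sum>k\<in>{k\<in>{1..n}. phi n w ! (k - 1) = D}. k)
         - int (\<Sum>i\<in>{i\<in>{1..n}. phi n w ! (i - 1) = U}. i)"
proof -
  have p: "w permutes {1..n}" by fact
  have inv1: "\<And>i. inv w (w i) = i" using permutes_inverses(2)[OF p] .
  have inv2: "\<And>i. w (inv w i) = i" using permutes_inverses(1)[OF p] .
  have ph: "\<And>k. k \<in> {1..n} \<Longrightarrow> phi n w ! (k - 1) = motzkin_step w k"
    unfolding phi_def by (auto simp del: upt_Suc simp: nth_map)
  have "int (dep n w) = (\<Sum>i\<in>{i\<in>{1..n}. w i > i}. int (w i) - int i)"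
    unfolding dep_def by (simp add: of_nat_diff)
  also have "\<dots> = (\<Sum>i\<in>{1..n}. if w i > i then int (w i) - int i else 0)"
    by (rule sum.inter_filter) simp
  also have "\<dots> = (\<Sum>i\<in>{1..n}. if w i > i then int (w i) else 0)
                 - (\<Sum>i\<in>{1..n}. if w i > i then int i else 0)"
    by (simp add: sum_subtractf[symmetric] if_distrib cong: if_cong) 
  also have "(\<Sum>i\<in>{1..n}. if w i > i then int (w i) else 0)
           = (\<Sum>j\<in>{1..n}. if j > inv w j then int j else 0)"
  proof -
    have b: "bij_betw w {1..n} {1..n}" using permutes_imp_bij[OF p] .
    show ?thesis
      using sum.reindex_bij_betw[OF b, of "\<lambda>j. if j > inv w j then int j else 0"]
      by (simp add: inv1)
  qed
  also have "(\<Sum>j\<in>{1..n}. if j > inv w j then int j else 0)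
       - (\<Sum>i\<in>{1..n}. if w i > i then int i else 0)
     = (\<Sum>j\<in>{1..n}. (if motzkin_step w j = D then int j else 0)
                       - (if motzkin_step w j = U then int j else 0))"
    unfolding sum_subtractf[symmetric]
  proof (rule sum.cong[OF refl])
    fix j assume "j \<in> {1..n}"
    have a: "inv w j = j \<longleftrightarrow> w j = j"
      by (metis inv1 inv2)
    show "(if j > inv w j then int j else 0) - (if w j > j then int j else 0)
       = (if motzkin_step w j = D then int j else 0) - (if motzkin_step w j = U then int j else 0)"
      unfolding motzkin_step_def using a
      by (cases "inv w j" j rule: linorder_cases; cases "w j" j rule: linorder_cases) auto
  qed
  also have "\<dots> = int (\<Sum>k\<in>{k\<in>{1..n}. phi n w ! (k - 1) = D}. k)
         - int (\<Sum>i\<in>{i\<in>{1..n}. phi n w ! (i - 1) = U}. i)"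
  proof -
    have e1: "{k\<in>{1..n}. phi n w ! (k - 1) = D} = {k\<in>{1..n}. motzkin_step w k = D}"
      using ph by auto
    have e2: "{k\<in>{1..n}. phi n w ! (k - 1) = U} = {k\<in>{1..n}. motzkin_step w k = U}"
      using ph by auto
    have f1: "(\<Sum>k\<in>{k\<in>{1..n}. motzkin_step w k = D}. int k) = (\<Sum>j\<in>{1..n}. if motzkin_step w j = D then int j else 0)"
      by (rule sum.inter_filter) simp
    have f2: "(\<Sum>k\<in>{k\<in>{1..n}. motzkin_step w k = U}. int k) = (\<Sum>j\<in>{1..n}. if motzkin_step w j = U then int j else 0)"
      by (rule sum.inter_filter) simp
    show ?thesis unfolding e1 e2 sum_subtractf of_nat_sum f1 f2 ..
  qed
  finally show ?thesis .
qed

end
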